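(* Let $0<p<1$ and let $A\subseteq \mathbb{R}^n$. For every $x\in p\text{-conv}(A)$ with $x\neq 0$ there exist linearly independent vectors $P_1,\ldots,P_k\in A$ with $k\le n$ such that $x\in p\text{-conv}\{P_1,\ldots,P_k\}$. Moreover, if $0\in p\text{-conv}(A)$, then there exist $P_1,\ldots,P_k\in A$ with $k\le n+1$ such that $0\in p\text{-conv}\{P_1,\ldots,P_k\}$.
   Context: Let $0<p<1$ and let $X$ be a real vector space. A set $B\subseteq X$ is called $p$-convex if $\lambda x+\mu y\in B$ whenever $x,y\in B$ and $\lambda,\mu\ge 0$ with $\lambda^p+\mu^p=1$. For $A\subseteq X$, the $p$-convex hull $p\text{-conv}(A)$ is the intersection of all $p$-convex subsets of $X$ containing $A$. *)

theory Defs
  imports "HOL-Analysis.Analysis"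
begin

definition p_convex :: "real \<Rightarrow> 'a::real_vector set \<Rightarrow> bool" where
  "p_convex p B \<longleftrightarrow>
     (\<forall>x\<in>B. \<forall>y\<in>B. \<forall>a b. a \<ge> 0 \<and> b \<ge> 0 \<and> a powr p + b powr p = 1
        \<longrightarrow> a *\<^sub>R x + b *\<^sub>R y \<in> B)"

definition p_conv :: "real \<Rightarrow> 'a::real_vector set \<Rightarrow> 'a set" where
  "p_conv p A = \<Inter> {B. p_convex p B \<and> A \<subseteq> B}"

end

theory Submission imports Defs begin

lemma powr_concave_pos:
  fixes p :: real assumes "0 < p" "p < 1"
  shows "concave_on {0<..} (\<lambda>x. x powr p)"
proof (rule f''_le0_imp_concave[where f' = "\<lambda>x. p * x powr (p - 1)" and f'' = "\<lambda>x. p * ((p - 1) * x powr (p - 2))"])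
  show "convex ({0<..} :: real set)" by (rule convex_real_interval)
  fix x :: real assume x: "x \<in> {0<..}"
  then have x0: "x > 0" by simp
  show "((\<lambda>x. x powr p) has_real_derivative p * x powr (p - 1)) (at x)"
    using x0 by (auto intro!: derivative_eq_intros)
  show "((\<lambda>x. p * x powr (p - 1)) has_real_derivative p * ((p - 1) * x powr (p - 2))) (at x)"
    using x0 by (auto intro!: derivative_eq_intros simp: algebra_simps)
  have "p * ((p - 1) * x powr (p - 2)) = - (p * ((1 - p) * x powr (p - 2)))" by (simp add: algebra_simps)
  also have "\<dots> \<le> 0" using assms x0 by (intro neg_le_0_iff_le[THEN iffD2] mult_nonneg_nonneg) auto
  finally show "p * ((p - 1) * x powr (p - 2)) \<le> 0" .
qed

lemma powr_concave_ineq: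
  fixes p a b t :: real
  assumes "0 < p" "p < 1" "0 \<le> a" "0 \<le> b" "0 \<le> t" "t \<le> 1"
  shows "t * a powr p + (1 - t) * b powr p \<le> (t * a + (1 - t) * b) powr p"
proof (cases "a = 0 \<or> b = 0")
  case True
  have key: "u \<le> u powr p" if "0 \<le> u" "u \<le> 1" for u :: real
  proof (cases "u = 0")
    case False
    then have "u powr 1 \<le> u powr p" using that assms by (intro powr_mono') auto
    then show ?thesis using that by simp
  qed simp
  show ?thesis
  proof (cases "a = 0")
    case True
    have "(1 - t) * b powr p \<le> (1 - t) powr p * b powr p"
      using key[of "1-t"] assms by (intro mult_right_mono) auto
    also have "\<dots> = ((1 - t) * b) powr p" using assms by (simp add: powr_mult)
    finally show ?thesis using True assms by simp
  next
    case False
    then have "b = 0" using True by simp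
    have "t * a powr p \<le> t powr p * a powr p"
      using key[of "t"] assms by (intro mult_right_mono) auto
    also have "\<dots> = (t * a) powr p" using assms by (simp add: powr_mult)
    finally show ?thesis using \<open>b = 0\<close> assms by simp
  qed
next
  case False
  then have "a > 0" "b > 0" using assms by auto
  from concave_onD[OF powr_concave_pos[OF assms(1,2)], of "1 - t" a b] assms \<open>a>0\<close> \<open>b>0\<close>
  show ?thesis by simp
qed

lemma powr_subadd:
  fixes p a b :: real
  assumes "0 < p" "p < 1" "0 \<le> a" "0 \<le> b"
  shows "(a + b) powr p \<le> a powr p + b powr p"
proof (cases "a + b = 0")
  case False
  then have s: "a + b > 0" using assms by simp
  have key: "u \<le> u powr p" if "0 \<le> u" "u \<le> 1" for u :: real
  proof (cases "u = 0")
    case False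
    then have "u powr 1 \<le> u powr p" using that assms by (intro powr_mono') auto
    then show ?thesis using that by simp
  qed simp
  have "a/(a+b) + b/(a+b) = (a+b)/(a+b)" by (rule add_divide_distrib[symmetric])
  then have "1 = a/(a+b) + b/(a+b)" using s by simp
  also have "\<dots> \<le> (a/(a+b)) powr p + (b/(a+b)) powr p"
    using key[of "a/(a+b)"] key[of "b/(a+b)"] s assms by (intro add_mono) auto
  also have "\<dots> = (a powr p + b powr p) / (a+b) powr p"
    using assms s by (simp add: powr_divide add_divide_distrib)
  finally show ?thesis using s by (simp add: field_simps)
qed (use assms in auto)

lemma pconv_sum1:
  fixes B :: "'a::real_vector set"
  assumes pc: "p_convex p B" and p: "0 < p" "p < 1"
  shows "finite I \<Longrightarrow> I \<noteq> {} \<Longrightarrow> I \<subseteq> B \<Longrightarrow> (\<forall>i\<in>I. 0 < l i) \<Longrightarrow>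
    (\<Sum>i\<in>I. l i powr p) = 1 \<Longrightarrow> (\<Sum>i\<in>I. l i *\<^sub>R i) \<in> B"
proof (induction I arbitrary: l rule: finite_ne_induct)
  case (singleton j)
  then have h: "l j powr p = 1" "l j > 0" by simp_all
  have "l j = 1"
  proof (rule ccontr)
    assume "l j \<noteq> 1"
    then consider "l j < 1" | "l j > 1" by linarith
    then show False
    proof cases
      case 1
      then have "l j powr p < 1 powr p" using h p by (intro powr_less_mono2) auto
      then show False using h by simp
    next
      case 2
      then have "1 powr p < l j powr p" using h p by (intro powr_less_mono2) auto
      then show False using h by simp
    qed
  qed
  then show ?case using singleton by simp
next
  case (insert j F)
  have IB: "insert j F \<subseteq> B" and lp: "\<forall>i\<in>insert j F. 0 < l i"
    and s1: "(\<Sum>i\<in>insert j F. l i powr p) = 1" using insert.prems by auto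
  define L where "L = (\<Sum>i\<in>F. l i powr p)"
  have Lpos: "L > 0" unfolding L_def
    by (rule sum_pos) (use insert.hyps(1,2) lp in auto)
  have sumeq: "l j powr p + L = 1" using insert.hyps(1,3) s1 by (simp add: L_def)
  define c where "c = L powr (1/p)"
  have cpos: "c > 0" using Lpos by (simp add: c_def)
  have cp: "c powr p = L" using Lpos p by (simp add: c_def powr_powr)
  have inner: "(\<Sum>i\<in>F. (l i / c) *\<^sub>R i) \<in> B"
  proof -
    have i1: "F \<subseteq> B" using IB by auto
    have i2: "\<forall>i\<in>F. 0 < l i / c" using lp cpos by auto
    have "(\<Sum>i\<in>F. (l i / c) powr p) = (\<Sum>i\<in>F. l i powr p / L)"
      using lp cpos cp by (intro sum.cong) (auto simp: powr_divide less_imp_le)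
    also have "\<dots> = L / L" by (simp add: sum_divide_distrib[symmetric] L_def)
    also have "\<dots> = 1" using Lpos by simp
    finally have i3: "(\<Sum>i\<in>F. (l i / c) powr p) = 1" .
    show ?thesis using insert.IH[of "\<lambda>i. l i / c"] i1 i2 i3 by blast
  qed
  have "l j *\<^sub>R j + c *\<^sub>R (\<Sum>i\<in>F. (l i / c) *\<^sub>R i) \<in> B"
  proof -
    have "j \<in> B" "l j > 0" using IB lp by auto
    then show ?thesis using pc inner sumeq cp cpos unfolding p_convex_def
      by (meson less_imp_le)
  qed
  moreover have "c *\<^sub>R (\<Sum>i\<in>F. (l i / c) *\<^sub>R i) = (\<Sum>i\<in>F. l i *\<^sub>R i)"
    using cpos by (simp add: scaleR_sum_right)
  ultimately show ?case using insert.hyps(1,3) by simp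
qed

lemma pconv_scale:
  fixes B :: "'a::real_vector set"
  assumes pc: "p_convex p B" and p: "0 < p" "p < 1" and x: "x \<in> B" and s: "0 < s" "s \<le> 1"
  shows "s *\<^sub>R x \<in> B"
proof -
  define d where "d = (1/2::real) powr (1/p)"
  have dpos: "d > 0" by (simp add: d_def)
  have dp: "d powr p = 1/2" using p by (simp add: d_def powr_powr)
  have d2: "d < 1/2"
  proof -
    have "(1/2::real) powr (1/p) < (1/2) powr 1"
      using p by (intro powr_less_mono') (auto simp: field_simps)
    then show ?thesis by (simp add: d_def)
  qed
  define g where "g a = a + (1 - a powr p) powr (1/p)" for a
  have step: "u *\<^sub>R y \<in> B" if y: "y \<in> B" and u: "2*d \<le> u" "u \<le> 1" for y u
  proof -
    have base: "1/2 \<le> 1 - a powr p" if "a \<in> {0..d}" for a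
    proof -
      have "a powr p \<le> d powr p" using that p by (intro powr_mono2) auto
      then show ?thesis using dp by simp
    qed
    have c1: "continuous_on {0..d} (\<lambda>a. a powr p)"
      by (rule continuous_on_powr') (auto intro: continuous_intros simp: p)
    have c2: "continuous_on {0..d} (\<lambda>a. (1 - a powr p) powr (1/p))"
    proof (rule continuous_on_powr')
      show "continuous_on {0..d} (\<lambda>a. 1 - a powr p)" by (intro continuous_on_diff continuous_on_const c1)
      show "continuous_on {0..d} (\<lambda>a. 1/p)" by (rule continuous_on_const)
      show "\<forall>a\<in>{0..d}. 0 \<le> 1 - a powr p \<and> (1 - a powr p = 0 \<longrightarrow> 1/p > 0)"
        using base p by fastforce
    qed
    have cont: "continuous_on {0..d} g" unfolding g_def
      by (rule continuous_on_add[OF continuous_on_id c2])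
    have g0: "g 0 = 1" by (simp add: g_def)
    have gd1: "g d = d + (1 - d powr p) powr (1/p)" by (simp add: g_def)
    have gd2: "(1 - d powr p) powr (1/p) = d" unfolding dp by (simp add: d_def)
    have gd: "g d = 2 * d" using gd1 gd2 by simp
    have iv1: "g d \<le> u" using gd u by simp
    have iv2: "u \<le> g 0" using g0 u by simp
    have iv3: "0 \<le> d" using dpos by simp
    obtain a where a: "0 \<le> a" "a \<le> d" "g a = u"
      using IVT2'[of g d u 0, OF iv1 iv2 iv3 cont] by blast
    define b where "b = (1 - a powr p) powr (1/p)"
    have bpos: "b \<ge> 0" by (simp add: b_def)
    have "1/2 \<le> 1 - a powr p" using base a by auto
    then have bp: "b powr p = 1 - a powr p" using p by (simp add: b_def powr_powr)
    have ab1: "a powr p + b powr p = 1" using bp by simp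
    have "a *\<^sub>R y + b *\<^sub>R y \<in> B"
      using pc y a(1) bpos ab1 unfolding p_convex_def by blast
    moreover have "a + b = u" using a by (simp add: g_def b_def)
    ultimately show ?thesis by (metis scaleR_add_left)
  qed
  have ind: "\<forall>u. (2*d)^n \<le> u \<and> u \<le> 1 \<longrightarrow> u *\<^sub>R x \<in> B" for n
  proof (induction n)
    case 0
    then show ?case using x by auto
  next
    case (Suc n)
    show ?case
    proof (intro allI impI)
      fix u assume u: "(2*d)^Suc n \<le> u \<and> u \<le> 1"
      show "u *\<^sub>R x \<in> B"
      proof (cases "(2*d)^n \<le> u")
        case True
        then show ?thesis using Suc u by auto
      next
        case False
        define v where "v = (2*d)^n"
        have vpos: "v > 0" using dpos by (simp add: v_def)
        have v1: "v \<le> 1" using dpos d2 unfolding v_def by (intro power_le_one) auto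
        have vx: "v *\<^sub>R x \<in> B" using Suc v1 by (auto simp: v_def)
        have "2*d * v \<le> u" using u by (simp add: v_def)
        then have "2*d \<le> u / v" using vpos by (simp add: pos_le_divide_eq)
        moreover have "u / v \<le> 1" using False vpos by (simp add: v_def divide_le_eq_1)
        ultimately have "(u / v) *\<^sub>R (v *\<^sub>R x) \<in> B" using step vx by blast
        then show ?thesis using vpos by simp
      qed
    qed
  qed
  obtain n where "(2*d)^n < s" using real_arch_pow_inv[of s "2*d"] s d2 by auto
  then show ?thesis using ind[of n] s by auto
qed

definition prep :: "real \<Rightarrow> 'a::real_vector set \<Rightarrow> 'a \<Rightarrow> 'a set \<Rightarrow> ('a \<Rightarrow> real) \<Rightarrow> bool" where
  "prep p A x I l \<longleftrightarrow> finite I \<and> I \<subseteq> A \<and> (\<forall>i\<in>I. 0 < l i) \<and> (\<Sum>i\<in>I. l i powr p) \<le> 1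
     \<and> x = (\<Sum>i\<in>I. l i *\<^sub>R i)"

lemma rep_in_pconv:
  assumes p: "0 < p" "p < 1" and r: "prep p A x I l" and ne: "I \<noteq> {}"
  shows "x \<in> p_conv p I"
proof -
  have fin: "finite I" and lpos: "\<forall>i\<in>I. 0 < l i" and le1: "(\<Sum>i\<in>I. l i powr p) \<le> 1"
    and xe: "x = (\<Sum>i\<in>I. l i *\<^sub>R i)" using r by (auto simp: prep_def)
  define s where "s = (\<Sum>i\<in>I. l i powr p)"
  have spos: "s > 0" unfolding s_def using fin ne lpos by (intro sum_pos) auto
  define c where "c = s powr (1/p)"
  have cpos: "c > 0" using spos by (simp add: c_def)
  have c1: "c \<le> 1" unfolding c_def using spos le1 p by (intro powr_le1) (auto simp: s_def)
  have cp: "c powr p = s" using spos p by (simp add: c_def powr_powr)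
  show ?thesis unfolding p_conv_def
  proof (intro InterI, clarify)
    fix B assume pc: "p_convex p B" and IB: "I \<subseteq> B"
    have "(\<Sum>i\<in>I. (l i / c) powr p) = (\<Sum>i\<in>I. l i powr p / s)"
      using lpos cpos cp by (intro sum.cong) (auto simp: powr_divide less_imp_le)
    also have "\<dots> = s / s" by (simp add: sum_divide_distrib[symmetric] s_def)
    also have "\<dots> = 1" using spos by simp
    finally have "(\<Sum>i\<in>I. (l i / c) *\<^sub>R i) \<in> B"
      using pconv_sum1[OF pc p fin ne IB] lpos cpos by auto
    then have "c *\<^sub>R (\<Sum>i\<in>I. (l i / c) *\<^sub>R i) \<in> B"
      using pconv_scale[OF pc p] cpos c1 by blast
    moreover have "c *\<^sub>R (\<Sum>i\<in>I. (l i / c) *\<^sub>R i) = x"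
      using cpos xe by (simp add: scaleR_sum_right)
    ultimately show "x \<in> B" by simp
  qed
qed

lemma sum_if_ext:
  assumes "finite K" "I \<subseteq> K"
  shows "(\<Sum>i\<in>K. if i \<in> I then f i else 0) = (\<Sum>i\<in>I. f i)"
proof -
  have "(\<Sum>i\<in>K. if i \<in> I then f i else 0) = sum f (K \<inter> I)"
    using assms(1) by (simp add: sum.inter_restrict)
  also have "K \<inter> I = I" using assms(2) by blast
  finally show ?thesis .
qed

lemma pconv_subset_rep:
  fixes A :: "'a::real_vector set"
  assumes p: "0 < p" "p < 1" and x: "x \<in> p_conv p A"
  shows "\<exists>I l. prep p A x I l \<and> I \<noteq> {}"
proof -
  define C where "C = {y. \<exists>I l. prep p A y I l \<and> I \<noteq> {}}"
  have AC: "A \<subseteq> C"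
  proof
    fix a assume a: "a \<in> A"
    have "prep p A a {a} (\<lambda>_. 1)" using a by (simp add: prep_def)
    then show "a \<in> C" unfolding C_def by blast
  qed
  have pcC: "p_convex p C" unfolding p_convex_def
  proof (intro ballI allI impI)
    fix y z a b assume y: "y \<in> C" and z: "z \<in> C" and ab: "0 \<le> a \<and> 0 \<le> b \<and> a powr p + b powr p = 1"
    from y obtain I l where I: "prep p A y I l" "I \<noteq> {}" unfolding C_def by blast
    from z obtain J m where J: "prep p A z J m" "J \<noteq> {}" unfolding C_def by blast
    have finI: "finite I" and IA: "I \<subseteq> A" and lpos: "\<forall>i\<in>I. 0 < l i"
      and lsum: "(\<Sum>i\<in>I. l i powr p) \<le> 1" and ye: "y = (\<Sum>i\<in>I. l i *\<^sub>R i)"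
      using I by (auto simp: prep_def)
    have finJ: "finite J" and JA: "J \<subseteq> A" and mpos: "\<forall>i\<in>J. 0 < m i"
      and msum: "(\<Sum>i\<in>J. m i powr p) \<le> 1" and ze: "z = (\<Sum>i\<in>J. m i *\<^sub>R i)"
      using J by (auto simp: prep_def)
    show "a *\<^sub>R y + b *\<^sub>R z \<in> C"
    proof (cases "a = 0")
      case True
      then have "b powr p = 1" using ab by simp
      then have "b = 1" using ab p
        by (metis less_irrefl linorder_neqE_linordered_idom powr_less_mono2 powr_one_eq_one zero_le_one)
      then show ?thesis using True z by simp
    next
      case a0: False
      show ?thesis
      proof (cases "b = 0")
        case True
        then have "a powr p = 1" using ab by simp
        then have "a = 1" using ab p
          by (metis less_irrefl linorder_neqE_linordered_idom powr_less_mono2 powr_one_eq_one zero_le_one)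
        then show ?thesis using True y by simp
      next
        case b0: False
        have apos: "a > 0" and bpos: "b > 0" using a0 b0 ab by auto
        define K where "K = I \<union> J"
        define l' where "l' i = (if i \<in> I then l i else 0)" for i
        define m' where "m' i = (if i \<in> J then m i else 0)" for i
        define n where "n i = a * l' i + b * m' i" for i
        have finK: "finite K" using finI finJ by (simp add: K_def)
        have KA: "K \<subseteq> A" using IA JA by (simp add: K_def)
        have npos: "\<forall>i\<in>K. 0 < n i"
        proof
          fix i assume "i \<in> K"
          then consider "i \<in> I" | "i \<in> J" by (auto simp: K_def)
          then show "0 < n i"
          proof cases
            case 1
            then have "0 < a * l' i" using apos lpos by (simp add: l'_def)
            moreover have "0 \<le> b * m' i" using bpos mpos by (simp add: m'_def less_imp_le)
            ultimately show ?thesis by (simp add: n_def)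
          next
            case 2
            then have "0 < b * m' i" using bpos mpos by (simp add: m'_def)
            moreover have "0 \<le> a * l' i" using apos lpos by (simp add: l'_def less_imp_le)
            ultimately show ?thesis by (simp add: n_def)
          qed
        qed
        have l'nn: "0 \<le> l' i" for i using lpos by (simp add: l'_def less_imp_le)
        have m'nn: "0 \<le> m' i" for i using mpos by (simp add: m'_def less_imp_le)
        have pw: "n i powr p \<le> a powr p * (if i \<in> I then l i powr p else 0) + b powr p * (if i \<in> J then m i powr p else 0)" for i
        proof -
          have "n i powr p \<le> (a * l' i) powr p + (b * m' i) powr p"
            unfolding n_def using l'nn[of i] m'nn[of i] ab p by (intro powr_subadd) auto
          also have "\<dots> = a powr p * l' i powr p + b powr p * m' i powr p"
            using l'nn[of i] m'nn[of i] ab by (simp add: powr_mult)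
          also have "\<dots> = a powr p * (if i \<in> I then l i powr p else 0) + b powr p * (if i \<in> J then m i powr p else 0)"
            by (simp add: l'_def m'_def)
          finally show ?thesis .
        qed
        have "(\<Sum>i\<in>K. n i powr p) \<le> (\<Sum>i\<in>K. a powr p * (if i \<in> I then l i powr p else 0) + b powr p * (if i \<in> J then m i powr p else 0))"
          by (rule sum_mono) (rule pw)
        also have "\<dots> = a powr p * (\<Sum>i\<in>K. if i \<in> I then l i powr p else 0) + b powr p * (\<Sum>i\<in>K. if i \<in> J then m i powr p else 0)"
          by (simp add: sum.distrib sum_distrib_left)
        also have "\<dots> = a powr p * (\<Sum>i\<in>I. l i powr p) + b powr p * (\<Sum>i\<in>J. m i powr p)"
          using finK by (simp add: sum_if_ext K_def)
        also have "\<dots> \<le> a powr p * 1 + b powr p * 1"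
          using lsum msum by (intro add_mono mult_left_mono) auto
        also have "\<dots> = 1" using ab by simp
        finally have nsum: "(\<Sum>i\<in>K. n i powr p) \<le> 1" .
        have "(\<Sum>i\<in>K. n i *\<^sub>R i) = a *\<^sub>R (\<Sum>i\<in>K. l' i *\<^sub>R i) + b *\<^sub>R (\<Sum>i\<in>K. m' i *\<^sub>R i)"
          by (simp add: n_def scaleR_add_left sum.distrib scaleR_sum_right)
        also have "(\<Sum>i\<in>K. l' i *\<^sub>R i) = (\<Sum>i\<in>K. if i \<in> I then l i *\<^sub>R i else 0)"
          by (intro sum.cong) (auto simp: l'_def)
        also have "\<dots> = y" using finK ye by (simp add: sum_if_ext K_def)
        also have "(\<Sum>i\<in>K. m' i *\<^sub>R i) = (\<Sum>i\<in>K. if i \<in> J then m i *\<^sub>R i else 0)"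
          by (intro sum.cong) (auto simp: m'_def)
        also have "\<dots> = z" using finK ze by (simp add: sum_if_ext K_def)
        finally have ne: "a *\<^sub>R y + b *\<^sub>R z = (\<Sum>i\<in>K. n i *\<^sub>R i)" by simp
        have "prep p A (a *\<^sub>R y + b *\<^sub>R z) K n"
          unfolding prep_def using finK KA npos nsum ne by blast
        moreover have "K \<noteq> {}" using I(2) by (simp add: K_def)
        ultimately show ?thesis unfolding C_def by blast
      qed
    qed
  qed
  have "p_conv p A \<subseteq> C" unfolding p_conv_def using pcC AC by blast
  then show ?thesis using x unfolding C_def by blast
qed

lemma shift:
  fixes l m :: "'a \<Rightarrow> real"
  assumes fin: "finite I" and lpos: "\<forall>i\<in>I. 0 < l i" and neg: "\<exists>i\<in>I. m i < 0"
  obtains t where "t > 0" "\<forall>i\<in>I. 0 \<le> l i + t * m i" "\<exists>k\<in>I. l k + t * m k = 0"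
proof -
  define N where "N = {i\<in>I. m i < 0}"
  have finN: "finite N" using fin by (simp add: N_def)
  have neN: "N \<noteq> {}" using neg by (auto simp: N_def)
  define t where "t = Min ((\<lambda>i. l i / (- m i)) ` N)"
  have "t \<in> (\<lambda>i. l i / (- m i)) ` N" unfolding t_def using finN neN by (intro Min_in) auto
  then obtain k where k: "k \<in> N" "t = l k / (- m k)" by blast
  have tle: "t \<le> l i / (- m i)" if "i \<in> N" for i
    unfolding t_def using finN that by (intro Min_le) auto
  have kI: "k \<in> I" "m k < 0" using k by (auto simp: N_def)
  have "0 < l k / (- m k)" using lpos kI by (intro divide_pos_pos) auto
  then have tpos: "t > 0" using k(2) by simp
  have nn: "\<forall>i\<in>I. 0 \<le> l i + t * m i"
  proof
    fix i assume i: "i \<in> I"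
    show "0 \<le> l i + t * m i"
    proof (cases "m i < 0")
      case True
      then have "i \<in> N" using i by (simp add: N_def)
      then have "t \<le> l i / (- m i)" by (rule tle)
      moreover have mp: "0 < - m i" using True by simp
      ultimately have "t * (- m i) \<le> (l i / (- m i)) * (- m i)" by (intro mult_right_mono) auto
      also have "\<dots> = l i" using mp by simp
      finally have "t * (- m i) \<le> l i" .
      then show ?thesis by simp
    next
      case False
      then show ?thesis using tpos lpos i by (simp add: add_nonneg_nonneg less_imp_le)
    qed
  qed
  have "l k + t * m k = 0" using k(2) kI(2) by (simp add: field_simps)
  then show ?thesis using that tpos nn kI(1) by blast
qed

lemma restrict_rep:
  assumes fin: "finite I" and IA: "I \<subseteq> A" and nn: "\<forall>i\<in>I. 0 \<le> n i" and k: "k \<in> I" "n k = 0"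
    and s: "(\<Sum>i\<in>I. n i powr p) \<le> 1" and xe: "x = (\<Sum>i\<in>I. n i *\<^sub>R i)"
  shows "prep p A x {i\<in>I. 0 < n i} n \<and> {i\<in>I. 0 < n i} \<subset> I \<and> sum n {i\<in>I. 0 < n i} = sum n I"
proof -
  define S where "S = {i\<in>I. 0 < n i}"
  have SI: "S \<subseteq> I" by (auto simp: S_def)
  have z: "\<forall>i\<in>I - S. n i = 0" using nn by (auto simp: S_def)
  have finS: "finite S" using fin SI by (rule rev_finite_subset)
  have e1: "sum n S = sum n I" using fin SI z by (intro sum.mono_neutral_left) auto
  have e2: "(\<Sum>i\<in>S. n i powr p) = (\<Sum>i\<in>I. n i powr p)" using fin SI z by (intro sum.mono_neutral_left) auto
  have e3: "(\<Sum>i\<in>S. n i *\<^sub>R i) = (\<Sum>i\<in>I. n i *\<^sub>R i)" using fin SI z by (intro sum.mono_neutral_left) auto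
  have "k \<notin> S" using k by (simp add: S_def)
  then have "S \<subset> I" using SI k by blast
  moreover have "prep p A x S n" unfolding prep_def using finS SI IA e2 e3 s xe by (auto simp: S_def)
  ultimately show ?thesis using e1 by (simp add: S_def)
qed

lemma lin_comb_shift:
  fixes I :: "'a::real_vector set"
  shows "(\<Sum>i\<in>I. (l i + t * m i) *\<^sub>R i) = (\<Sum>i\<in>I. l i *\<^sub>R i) + t *\<^sub>R (\<Sum>i\<in>I. m i *\<^sub>R i)"
  by (simp add: scaleR_add_left sum.distrib scaleR_sum_right)

lemma reduce_nonpos:
  fixes A :: "'a::real_vector set"
  assumes p: "0 < p" "p < 1" and r: "prep p A x I l" and mz: "(\<Sum>i\<in>I. m i *\<^sub>R i) = 0"
    and mle: "\<forall>i\<in>I. m i \<le> 0" and neg: "\<exists>i\<in>I. m i < 0"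
  shows "\<exists>I' l'. prep p A x I' l' \<and> I' \<subset> I \<and> (sum m I = 0 \<longrightarrow> sum l' I' = sum l I)"
proof -
  have fin: "finite I" and IA: "I \<subseteq> A" and lpos: "\<forall>i\<in>I. 0 < l i"
    and ls: "(\<Sum>i\<in>I. l i powr p) \<le> 1" and xe: "x = (\<Sum>i\<in>I. l i *\<^sub>R i)"
    using r by (auto simp: prep_def)
  obtain t where t: "t > 0" "\<forall>i\<in>I. 0 \<le> l i + t * m i" "\<exists>k\<in>I. l k + t * m k = 0"
    using shift[OF fin lpos neg] by blast
  define n where "n i = l i + t * m i" for i
  have nn: "\<forall>i\<in>I. 0 \<le> n i" using t by (simp add: n_def)
  obtain k where k: "k \<in> I" "n k = 0" using t by (auto simp: n_def)
  have "(\<Sum>i\<in>I. n i powr p) \<le> (\<Sum>i\<in>I. l i powr p)"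
  proof (rule sum_mono)
    fix i assume i: "i \<in> I"
    have "n i \<le> l i" using mle i t by (simp add: n_def mult_nonneg_nonpos)
    then show "n i powr p \<le> l i powr p" using nn i p by (intro powr_mono2) auto
  qed
  then have ns: "(\<Sum>i\<in>I. n i powr p) \<le> 1" using ls by simp
  have nx: "x = (\<Sum>i\<in>I. n i *\<^sub>R i)" using xe mz by (simp add: n_def lin_comb_shift)
  have nsum: "sum n I = sum l I + t * sum m I" by (simp add: n_def sum.distrib sum_distrib_left)
  from restrict_rep[OF fin IA nn k ns nx] obtain S where
    S: "prep p A x S n" "S \<subset> I" "sum n S = sum n I" by blast
  have "sum m I = 0 \<longrightarrow> sum n S = sum l I" using nsum S(3) by simp
  then show ?thesis using S by blast
qed

lemma reduce:
  fixes A :: "'a::real_vector set"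
  assumes p: "0 < p" "p < 1" and r: "prep p A x I l" and mz: "(\<Sum>i\<in>I. m i *\<^sub>R i) = 0"
    and nz: "\<exists>i\<in>I. m i \<noteq> 0"
  shows "\<exists>I' l'. prep p A x I' l' \<and> I' \<subset> I \<and> (sum m I = 0 \<longrightarrow> sum l' I' = sum l I)"
proof -
  have fin: "finite I" and IA: "I \<subseteq> A" and lpos: "\<forall>i\<in>I. 0 < l i"
    and ls: "(\<Sum>i\<in>I. l i powr p) \<le> 1" and xe: "x = (\<Sum>i\<in>I. l i *\<^sub>R i)"
    using r by (auto simp: prep_def)
  have mz': "(\<Sum>i\<in>I. (- m i) *\<^sub>R i) = 0" using mz by (simp add: sum_negf)
  show ?thesis
  proof (cases "\<exists>i\<in>I. m i > 0")
    case False
    then have "\<forall>i\<in>I. m i \<le> 0" by auto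
    moreover have "\<exists>i\<in>I. m i < 0" using nz False by force
    ultimately show ?thesis using reduce_nonpos[OF p r mz] by blast
  next
    case pos: True
    show ?thesis
    proof (cases "\<exists>i\<in>I. m i < 0")
      case False
      then have "\<forall>i\<in>I. - m i \<le> 0" by auto
      moreover have "\<exists>i\<in>I. - m i < 0" using pos by auto
      ultimately have "\<exists>I' l'. prep p A x I' l' \<and> I' \<subset> I \<and> (sum (\<lambda>i. - m i) I = 0 \<longrightarrow> sum l' I' = sum l I)"
        using reduce_nonpos[OF p r mz'] by blast
      then show ?thesis by (simp add: sum_negf)
    next
      case neg: True
      obtain t where t: "t > 0" "\<forall>i\<in>I. 0 \<le> l i + t * m i" "\<exists>k\<in>I. l k + t * m k = 0"
        using shift[OF fin lpos neg] by blast
      have neg': "\<exists>i\<in>I. - m i < 0" using pos by auto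
      obtain s where s: "s > 0" "\<forall>i\<in>I. 0 \<le> l i + s * (- m i)" "\<exists>k\<in>I. l k + s * (- m k) = 0"
        using shift[OF fin lpos neg'] by blast
      define n where "n i = l i + t * m i" for i
      define q where "q i = l i + s * (- m i)" for i
      define th where "th = s / (s + t)"
      have th: "0 \<le> th" "th \<le> 1" using s t by (auto simp: th_def)
      have nn: "\<forall>i\<in>I. 0 \<le> n i" using t by (simp add: n_def)
      have qn: "\<forall>i\<in>I. 0 \<le> q i" using s by (simp add: q_def)
      have comb: "l i = th * n i + (1 - th) * q i" for i
      proof -
        have e: "th * t = (1 - th) * s" using s t by (simp add: th_def field_simps)
        have "th * n i + (1 - th) * q i = l i + (th * t - (1 - th) * s) * m i"
          by (simp add: n_def q_def algebra_simps)
        then show ?thesis using e by simp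
      qed
      have "(\<Sum>i\<in>I. th * n i powr p + (1 - th) * q i powr p) \<le> (\<Sum>i\<in>I. l i powr p)"
      proof (rule sum_mono)
        fix i assume i: "i \<in> I"
        show "th * n i powr p + (1 - th) * q i powr p \<le> l i powr p"
          unfolding comb[of i] using powr_concave_ineq[OF p, of "n i" "q i" th] nn qn i th by auto
      qed
      then have conv: "th * (\<Sum>i\<in>I. n i powr p) + (1 - th) * (\<Sum>i\<in>I. q i powr p) \<le> (\<Sum>i\<in>I. l i powr p)"
        by (simp add: sum.distrib sum_distrib_left)
      have nx: "x = (\<Sum>i\<in>I. n i *\<^sub>R i)" using xe mz by (simp add: n_def lin_comb_shift)
      have qeq: "(\<Sum>i\<in>I. q i *\<^sub>R i) = (\<Sum>i\<in>I. l i *\<^sub>R i) + s *\<^sub>R (\<Sum>i\<in>I. (- m i) *\<^sub>R i)"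
        unfolding q_def by (rule lin_comb_shift)
      have qx: "x = (\<Sum>i\<in>I. q i *\<^sub>R i)" unfolding qeq mz' using xe by simp
      have nsum: "sum n I = sum l I + t * sum m I" by (simp add: n_def sum.distrib sum_distrib_left)
      have qsum: "sum q I = sum l I - s * sum m I" by (simp add: q_def sum_subtractf sum_distrib_left)
      obtain kn where kn: "kn \<in> I" "n kn = 0" using t by (auto simp: n_def)
      obtain kq where kq: "kq \<in> I" "q kq = 0" using s by (auto simp: q_def)
      have "(\<Sum>i\<in>I. n i powr p) \<le> (\<Sum>i\<in>I. l i powr p) \<or> (\<Sum>i\<in>I. q i powr p) \<le> (\<Sum>i\<in>I. l i powr p)"
      proof (rule ccontr)
        assume h: "\<not> ((\<Sum>i\<in>I. n i powr p) \<le> (\<Sum>i\<in>I. l i powr p) \<or> (\<Sum>i\<in>I. q i powr p) \<le> (\<Sum>i\<in>I. l i powr p))"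
        then have h1: "(\<Sum>i\<in>I. l i powr p) < (\<Sum>i\<in>I. n i powr p)"
          and h2: "(\<Sum>i\<in>I. l i powr p) < (\<Sum>i\<in>I. q i powr p)" by (auto simp: not_le)
        have "th * (\<Sum>i\<in>I. l i powr p) \<le> th * (\<Sum>i\<in>I. n i powr p)"
          using h1 th by (intro mult_left_mono) auto
        moreover have "(1 - th) * (\<Sum>i\<in>I. l i powr p) \<le> (1 - th) * (\<Sum>i\<in>I. q i powr p)"
          using h2 th by (intro mult_left_mono) auto
        moreover have "th > 0" using s t by (simp add: th_def)
        moreover have "th * (\<Sum>i\<in>I. l i powr p) < th * (\<Sum>i\<in>I. n i powr p)"
          using h1 \<open>th > 0\<close> by (intro mult_strict_left_mono) auto
        moreover have "th * (\<Sum>i\<in>I. l i powr p) + (1 - th) * (\<Sum>i\<in>I. l i powr p) = (\<Sum>i\<in>I. l i powr p)"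
          by (simp add: algebra_simps)
        ultimately have "(\<Sum>i\<in>I. l i powr p) < th * (\<Sum>i\<in>I. n i powr p) + (1 - th) * (\<Sum>i\<in>I. q i powr p)"
          by linarith
        then show False using conv by simp
      qed
      then show ?thesis
      proof
        assume "(\<Sum>i\<in>I. n i powr p) \<le> (\<Sum>i\<in>I. l i powr p)"
        then have ns: "(\<Sum>i\<in>I. n i powr p) \<le> 1" using ls by simp
        from restrict_rep[OF fin IA nn kn ns nx] obtain S where
          S: "prep p A x S n" "S \<subset> I" "sum n S = sum n I" by blast
        have "sum m I = 0 \<longrightarrow> sum n S = sum l I" using nsum S(3) by simp
        then show ?thesis using S by blast
      next
        assume "(\<Sum>i\<in>I. q i powr p) \<le> (\<Sum>i\<in>I. l i powr p)"
        then have qs: "(\<Sum>i\<in>I. q i powr p) \<le> 1" using ls by simp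
        from restrict_rep[OF fin IA qn kq qs qx] obtain S where
          S: "prep p A x S q" "S \<subset> I" "sum q S = sum q I" by blast
        have "sum m I = 0 \<longrightarrow> sum q S = sum l I" using qsum S(3) by simp
        then show ?thesis using S by blast
      qed
    qed
  qed
qed


theorem theorem1:
  fixes p :: real and A :: "'a::euclidean_space set"
  assumes "0 < p" and "p < 1"
  shows "(\<forall>x\<in>p_conv p A. x \<noteq> 0 \<longrightarrow>
            (\<exists>S. finite S \<and> S \<subseteq> A \<and> independent S \<and> card S \<le> DIM('a)
                 \<and> x \<in> p_conv p S))
       \<and> (0 \<in> p_conv p A \<longrightarrow>
            (\<exists>S. finite S \<and> S \<subseteq> A \<and> card S \<le> DIM('a) + 1
                 \<and> 0 \<in> p_conv p S))"
proof (intro conjI ballI impI)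
  fix x assume x: "x \<in> p_conv p A" "x \<noteq> 0"
  obtain I0 l0 where r0: "prep p A x I0 l0" using pconv_subset_rep[OF assms x(1)] by blast
  define P where "P n \<longleftrightarrow> (\<exists>I l. prep p A x I l \<and> card I = n)" for n
  have "P (card I0)" using r0 unfolding P_def by blast
  then have "P (LEAST n. P n)" by (rule LeastI)
  then obtain I l where r: "prep p A x I l" and cI: "card I = (LEAST n. P n)" unfolding P_def by blast
  have fin: "finite I" and IA: "I \<subseteq> A" and xe: "x = (\<Sum>i\<in>I. l i *\<^sub>R i)"
    using r by (auto simp: prep_def)
  have ind: "independent I"
  proof (rule ccontr)
    assume "\<not> independent I"
    then obtain u where u: "\<exists>v\<in>I. u v \<noteq> 0" "(\<Sum>v\<in>I. u v *\<^sub>R v) = 0"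
      using dependent_finite[OF fin] by blast
    from reduce[OF assms r u(2) u(1)] obtain I' l' where r': "prep p A x I' l'" "I' \<subset> I" by blast
    have "P (card I')" using r' unfolding P_def by blast
    moreover have "card I' < card I" using fin r'(2) by (rule psubset_card_mono)
    ultimately show False using not_less_Least[of "card I'" P] cI by simp
  qed
  have ne: "I \<noteq> {}" using x(2) xe by auto
  show "\<exists>S. finite S \<and> S \<subseteq> A \<and> independent S \<and> card S \<le> DIM('a) \<and> x \<in> p_conv p S"
    using fin IA ind independent_bound[OF ind] rep_in_pconv[OF assms r ne] by blast
next
  assume z: "0 \<in> p_conv p A"
  obtain I0 l0 where r0: "prep p A 0 I0 l0" "I0 \<noteq> {}" using pconv_subset_rep[OF assms z] by blast
  define P where "P n \<longleftrightarrow> (\<exists>I l. prep p A 0 I l \<and> I \<noteq> {} \<and> card I = n)" for n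
  have "P (card I0)" using r0 unfolding P_def by blast
  then have "P (LEAST n. P n)" by (rule LeastI)
  then obtain I l where r: "prep p A 0 I l" and ne: "I \<noteq> {}" and cI: "card I = (LEAST n. P n)"
    unfolding P_def by blast
  have fin: "finite I" and IA: "I \<subseteq> A" and lpos: "\<forall>i\<in>I. 0 < l i"
    using r by (auto simp: prep_def)
  have lsum: "sum l I > 0" using fin ne lpos by (intro sum_pos) auto
  have cle: "card I \<le> DIM('a) + 1"
  proof (rule ccontr)
    assume "\<not> card I \<le> DIM('a) + 1"
    then have "card I \<ge> DIM('a) + 2" by simp
    then have "affine_dependent I" using fin by (intro affine_dependent_biggerset)
    then obtain U where U: "sum U I = 0" "\<exists>v\<in>I. U v \<noteq> 0" "(\<Sum>v\<in>I. U v *\<^sub>R v) = 0"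
      using affine_dependent_explicit_finite[OF fin] by blast
    from reduce[OF assms r U(3) U(2)] U(1) obtain I' l' where
      r': "prep p A 0 I' l'" "I' \<subset> I" "sum l' I' = sum l I" by blast
    have "I' \<noteq> {}" using r'(3) lsum by auto
    then have "P (card I')" using r' unfolding P_def by blast
    moreover have "card I' < card I" using fin r'(2) by (rule psubset_card_mono)
    ultimately show False using not_less_Least[of "card I'" P] cI by simp
  qed
  show "\<exists>S. finite S \<and> S \<subseteq> A \<and> card S \<le> DIM('a) + 1 \<and> 0 \<in> p_conv p S"
    using fin IA cle rep_in_pconv[OF assms r ne] by blast
qed

end
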